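(* Let $k\ge 19$ be an integer and $n=6k$. There is no weakly-balanced permutation sequence of length $n$.
   Context: Let $n$ be a positive integer, $N$ a set of $n$ players and $[n]=\{1,\ldots,n\}$ a set of $n$ items. A permutation sequence of length $n$ is an ordered tuple $(\pi_1,\ldots,\pi_n)$ of bijections $\pi_t : N\to[n]$; on day $t$ player $i$ receives item $\pi_t(i)$. For $t\in[n]$ and $i\in N$, $Z_i^t$ is the multiset $\{\pi_1(i),\ldots,\pi_t(i)\}$, and for $j\in[t]$, $Z_i^t[j]$ is the $j$-th smallest element of $Z_i^t$ (counted with multiplicity). The sequence is called weakly-balanced if for every $t\in[n]$, every $i\in N$ and every $j\in[t]$: $Z_i^t[j]\le \lfloor jn/t+1\rfloor$. *)

theory Defs
  imports Complex_Main "HOL-Library.Multiset"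
begin

text \<open>A permutation sequence of length n on the player set N: P t is the
bijection of day t, written P t (t = 1..n), mapping N onto the items {1..n}.\<close>
definition perm_seq :: "'a set \<Rightarrow> nat \<Rightarrow> (nat \<Rightarrow> 'a \<Rightarrow> nat) \<Rightarrow> bool" where
  "perm_seq N n P \<longleftrightarrow> (\<forall>t\<in>{1..n}. bij_betw (P t) N {1..n})"

definition Zset :: "(nat \<Rightarrow> 'a \<Rightarrow> nat) \<Rightarrow> 'a \<Rightarrow> nat \<Rightarrow> nat multiset" where
  "Zset P i t = image_mset (\<lambda>s. P s i) (mset_set {1..t})"

text \<open>Z_i^t[j] = j-th smallest element (1-based, with multiplicity).\<close>
definition Zth :: "(nat \<Rightarrow> 'a \<Rightarrow> nat) \<Rightarrow> 'a \<Rightarrow> nat \<Rightarrow> nat \<Rightarrow> nat" where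
  "Zth P i t j = sorted_list_of_multiset (Zset P i t) ! (j - 1)"

definition weakly_balanced :: "'a set \<Rightarrow> nat \<Rightarrow> (nat \<Rightarrow> 'a \<Rightarrow> nat) \<Rightarrow> bool" where
  "weakly_balanced N n P \<longleftrightarrow> perm_seq N n P \<and>
     (\<forall>t\<in>{1..n}. \<forall>i\<in>N. \<forall>j\<in>{1..t}.
        real (Zth P i t j) \<le> of_int \<lfloor>real j * real n / real t + 1\<rfloor>)"

end

theory Submission
  imports Defs
begin

lemma sorted_count:
  fixes xs :: "nat list"
  assumes "sorted xs" "1 \<le> j" "j \<le> length xs" "xs ! (j-1) \<le> v"
  shows "j \<le> length (filter (\<lambda>x. x \<le> v) xs)"
proof -
  have "{0..<j} \<subseteq> {i. i < length xs \<and> xs!i \<le> v}"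
  proof
    fix i assume "i \<in> {0..<j}"
    then have "i \<le> j - 1" "j - 1 < length xs" using assms by auto
    then have "xs ! i \<le> xs ! (j-1)" using sorted_nth_mono[OF assms(1)] by blast
    then show "i \<in> {i. i < length xs \<and> xs!i \<le> v}" using assms \<open>i \<in> {0..<j}\<close> by auto
  qed
  then have "card {0..<j} \<le> card {i. i < length xs \<and> xs!i \<le> v}"
    by (intro card_mono) auto
  then show ?thesis by (simp add: length_filter_conv_card)
qed

lemma count_Zset:
  "size (filter_mset (\<lambda>x. x \<le> v) (Zset P i t)) = card {s\<in>{1..t}. P s i \<le> v}"
  unfolding Zset_def by (simp add: filter_mset_image_mset)

lemma wb_count:
  assumes wb: "weakly_balanced N n P" and i: "i \<in> N" and t: "t \<in> {1..n}"
    and j: "1 \<le> j" "j \<le> t" and v: "real j * real n / real t < real v"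
  shows "j \<le> card {s\<in>{1..t}. P s i \<le> v}"
proof -
  let ?xs = "sorted_list_of_multiset (Zset P i t)"
  have len: "length ?xs = t"
  proof -
    have "length ?xs = size (Zset P i t)" by (metis size_mset mset_sorted_list_of_multiset)
    also have "\<dots> = t" unfolding Zset_def by simp
    finally show ?thesis .
  qed
  have "real (Zth P i t j) \<le> of_int \<lfloor>real j * real n / real t + 1\<rfloor>"
    using wb i t j unfolding weakly_balanced_def by auto
  also have "\<dots> \<le> real j * real n / real t + 1" by (rule of_int_floor_le)
  finally have "real (Zth P i t j) < real v + 1" using v by linarith
  then have "Zth P i t j \<le> v" by linarith
  then have "?xs ! (j-1) \<le> v" unfolding Zth_def .
  then have "j \<le> length (filter (\<lambda>x. x \<le> v) ?xs)"
    using sorted_count[of ?xs j v] len j by simp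
  also have "\<dots> = size (filter_mset (\<lambda>x. x \<le> v) (mset ?xs))"
    by (metis mset_filter size_mset)
  also have "\<dots> = card {s\<in>{1..t}. P s i \<le> v}"
    using count_Zset by simp
  finally show ?thesis .
qed

lemma card_filter_ind:
  "card {s\<in>A. Q s} = (\<Sum>s\<in>A. (if Q s then 1 else 0::nat))" if "finite A"
  using that by (simp add: sum.inter_filter[symmetric])

lemma card2: "card {s\<in>{1..2::nat}. Q s} = (if Q 1 then 1 else 0) + (if Q 2 then (1::nat) else 0)"
proof -
  have e: "{1..2::nat} = {1,2}" by auto
  show ?thesis using card_filter_ind[of "{1..2::nat}" Q] unfolding e by simp
qed

lemma card3: "card {s\<in>{1..3::nat}. Q s} = (if Q 1 then 1 else 0) + (if Q 2 then 1 else 0) + (if Q 3 then (1::nat) else 0)"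
proof -
  have e: "{1..3::nat} = {1,2,3}" by auto
  show ?thesis using card_filter_ind[of "{1..3::nat}" Q] unfolding e by simp
qed

lemma card4: "card {s\<in>{1..4::nat}. Q s} = (if Q 1 then 1 else 0) + (if Q 2 then 1 else 0) + (if Q 3 then 1 else 0) + (if Q 4 then (1::nat) else 0)"
proof -
  have e: "{1..4::nat} = {1,2,3,4}" by auto
  show ?thesis using card_filter_ind[of "{1..4::nat}" Q] unfolding e by simp
qed

lemma card_day:
  assumes "bij_betw f N {1..n}" "v \<le> n"
  shows "card {i\<in>N. f i \<le> v} = v"
proof -
  have inj: "inj_on f {i\<in>N. f i \<le> v}"
    using assms(1) unfolding bij_betw_def by (auto intro: inj_on_subset)
  have "f ` {i\<in>N. f i \<le> v} = {1..v}"
  proof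
    show "f ` {i\<in>N. f i \<le> v} \<subseteq> {1..v}" using assms(1) by (auto simp: bij_betw_def)
    show "{1..v} \<subseteq> f ` {i\<in>N. f i \<le> v}"
    proof
      fix y assume "y \<in> {1..v}"
      then have "y \<in> f ` N" using assms unfolding bij_betw_def by auto
      then obtain i where "i \<in> N" "y = f i" by auto
      then show "y \<in> f ` {i\<in>N. f i \<le> v}" using \<open>y \<in> {1..v}\<close> by auto
    qed
  qed
  then show ?thesis using card_image[OF inj] by simp
qed

lemma ind4:
  fixes p1L p1H p1M p2L p2H p2M p3L p3H p3M p4L p4H p4M :: nat
  assumes "p1L \<le> p1H" "p1H \<le> p1M" "p1M \<le> 1" "p2L \<le> p2H" "p2H \<le> p2M" "p2M \<le> 1"
   "p3L \<le> p3H" "p3H \<le> p3M" "p3M \<le> 1" "p4L \<le> p4H" "p4H \<le> p4M" "p4M \<le> 1"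
   "1 \<le> p1L + p2L" "2 \<le> p1H + p2H + p3H" "2 \<le> p1L + p2L + p3L + p4L" "3 \<le> p1M + p2M + p3M + p4M"
  shows "4 \<le> p1L + p1M + p2L + p2M + p3H + p4M"
proof (cases "p1M + p2M = 2")
  case True
  then show ?thesis using assms by linarith
next
  case False
  then have F: "p1M + p2M \<le> 1" using assms(3,6) by linarith
  then have "p1H + p2H \<le> 1" "p1L + p2L \<le> 1" using assms(1,2,4,5) by linarith+
  then have "p1L + p2L = 1" "p1M + p2M = 1" "p1L + p2L + p1M + p2M \<le> 2" using assms(13) assms(1,2,4,5) F by linarith+
  moreover have "p3H = 1" using \<open>p1H + p2H \<le> 1\<close> assms(14) assms(8,9) by linarith
  moreover have "p4M = 1" using \<open>p1M + p2M = 1\<close> assms(16) assms(9,12) by linarith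
  ultimately show ?thesis by linarith
qed

theorem mainTheorem7:
  fixes N :: "'a set" and k n :: nat
  assumes "k \<ge> 19" and "n = 6 * k" and "finite N" and "card N = n"
  shows "\<not> (\<exists>P. weakly_balanced N n P)"
proof
  assume "\<exists>P. weakly_balanced N n P"
  then obtain P where wb: "weakly_balanced N n P" by blast
  define L where "L = 3*k+1"
  define H where "H = 4*k+1"
  define M where "M = (9*k+2) div 2"
  have LH: "L \<le> H" and HM: "H \<le> M" and M1: "9*k+1 \<le> 2*M" and M2: "2*M \<le> 9*k+2"
    unfolding L_def H_def M_def by auto
  have Mn: "M \<le> n" using assms(1,2) M2 by linarith
  have nr: "real n = 6 * real k" using assms(2) by simp
  have M1r: "9 * real k + 1 \<le> 2 * real M" 
  proof -
    have "real (9*k+1) \<le> real (2*M)" using M1 by (rule of_nat_mono)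
    then show ?thesis by simp
  qed
  define G where "G = (\<lambda>i. (if P 1 i \<le> L then 1 else 0) + (if P 1 i \<le> M then 1 else 0)
     + (if P 2 i \<le> L then 1 else 0) + (if P 2 i \<le> M then 1 else 0)
     + (if P 3 i \<le> H then 1 else 0) + (if P 4 i \<le> M then 1 else (0::nat)))"
  have per: "4 \<le> G i" if i: "i \<in> N" for i
  proof -
    have t2: "2 \<in> {1..n}" and t3: "3 \<in> {1..n}" and t4: "4 \<in> {1..n}" using assms by auto
    have a: "1 \<le> card {s\<in>{1..2}. P s i \<le> L}"
      by (rule wb_count[OF wb i t2]) (auto simp: nr L_def)
    have b: "2 \<le> card {s\<in>{1..3}. P s i \<le> H}"
      by (rule wb_count[OF wb i t3]) (auto simp: nr H_def)
    have c: "2 \<le> card {s\<in>{1..4}. P s i \<le> L}"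
      by (rule wb_count[OF wb i t4]) (auto simp: nr L_def)
    have d: "3 \<le> card {s\<in>{1..4}. P s i \<le> M}"
      by (rule wb_count[OF wb i t4]) (use M1r in \<open>auto simp: nr\<close>)
    have e2: "{1..2::nat} = {1,2}" and e3: "{1..3::nat} = {1,2,3}" and e4: "{1..4::nat} = {1,2,3,4}"
      by auto
    have a': "1 \<le> (if P 1 i \<le> L then 1 else 0) + (if P 2 i \<le> L then 1 else (0::nat))"
      using a unfolding card2 .
    have b': "2 \<le> (if P 1 i \<le> H then 1 else 0) + (if P 2 i \<le> H then 1 else 0) + (if P 3 i \<le> H then 1 else (0::nat))"
      using b unfolding card3 .
    have c': "2 \<le> (if P 1 i \<le> L then 1 else 0) + (if P 2 i \<le> L then 1 else 0) + (if P 3 i \<le> L then 1 else 0) + (if P 4 i \<le> L then 1 else (0::nat))"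
      using c unfolding card4 .
    have d': "3 \<le> (if P 1 i \<le> M then 1 else 0) + (if P 2 i \<le> M then 1 else 0) + (if P 3 i \<le> M then 1 else 0) + (if P 4 i \<le> M then 1 else (0::nat))"
      using d unfolding card4 .
    show ?thesis unfolding G_def
      by (rule ind4[where p4H = "if P 4 i \<le> H then 1 else 0", OF _ _ _ _ _ _ _ _ _ _ _ _ a' b' c' d']) (use LH HM in auto)
  qed
  have bj: "bij_betw (P d) N {1..n}" if "d \<in> {1..n}" for d
    using wb that unfolding weakly_balanced_def perm_seq_def by auto
  have cd: "(\<Sum>i\<in>N. (if P d i \<le> v then 1 else 0::nat)) = v" if "d \<in> {1..n}" "v \<le> n" for d v
    using card_day[OF bj[OF that(1)] that(2)] card_filter_ind[OF assms(3)] by simp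
  have "n \<ge> 4" using assms by auto
  then have ds: "1 \<in> {1..n}" "2 \<in> {1..n}" "3 \<in> {1..n}" "4 \<in> {1..n}" by auto
  have Ln: "L \<le> n" and Hn: "H \<le> n" using assms LH HM Mn by auto
  have "(\<Sum>i\<in>N. G i) = L + M + L + M + H + M"
  proof -
    have s1: "(\<Sum>i\<in>N. (if P 1 i \<le> L then 1 else 0::nat)) = L" by (rule cd) (use ds Ln in auto)
    have s2: "(\<Sum>i\<in>N. (if P 1 i \<le> M then 1 else 0::nat)) = M" by (rule cd) (use ds Mn in auto)
    have s3: "(\<Sum>i\<in>N. (if P 2 i \<le> L then 1 else 0::nat)) = L" by (rule cd) (use ds Ln in auto)
    have s4: "(\<Sum>i\<in>N. (if P 2 i \<le> M then 1 else 0::nat)) = M" by (rule cd) (use ds Mn in auto)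
    have s5: "(\<Sum>i\<in>N. (if P 3 i \<le> H then 1 else 0::nat)) = H" by (rule cd) (use ds Hn in auto)
    have s6: "(\<Sum>i\<in>N. (if P 4 i \<le> M then 1 else 0::nat)) = M" by (rule cd) (use ds Mn in auto)
    show ?thesis unfolding G_def sum.distrib s1 s2 s3 s4 s5 s6 ..
  qed
  moreover have "(\<Sum>i\<in>N. G i) \<ge> (\<Sum>i\<in>N. 4)" using per by (intro sum_mono) auto
  ultimately have "4 * n \<le> L + M + L + M + H + M" using assms(4) by simp
  then have "24*k \<le> 3*M + 10*k + 3" using assms(2) unfolding L_def H_def by simp
  then show False using M2 assms(1) by linarith
qed

end
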